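(* Let $m\geq 2$ and $G=T^+_{m,2}$ with root $r$ and stem $r'$. If $S$ is a Type II set for $G$, then $N_G[r]\setminus\mathcal{P}^\infty(S)=\{r',r\}$.
   Context: Power domination: for a graph $G=(V,E)$ and $S\subseteq V$, $\mathcal{P}^0(S)=N[S]$ and for $k\ge1$, $\mathcal{P}^k(S)=\mathcal{P}^{k-1}(S)\cup N^*(\mathcal{P}^{k-1}(S))$, where $x\in N^*(A)$ iff some $a\in A$ has $x$ as its only neighbor not in $A$; $\mathcal{P}^\infty(S)$ is the stable value (the set of observed vertices), and $S$ is a power dominating set if $\mathcal{P}^\infty(S)=V$. $T_{m,h}$ is the complete $m$-ary tree of height $h$ rooted at $r$; $T^+_{m,h}$ is $T_{m,h}$ plus a new vertex $r'$ (stem) joined to $r$. For $G=T^+_{m,h}$, a set $S\subseteq V(G)\setminus\{r'\}$ is Type I if it is a power dominating set for $G$; Type II if it is not but $S\cup\{r'\}$ is; Type 0 otherwise. *)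

theory Defs
  imports Main
begin

(* A simple graph is given by a vertex set V and a symmetric irreflexive
   adjacency relation E. *)

definition closed_nbhd :: "'a set \<Rightarrow> ('a \<Rightarrow> 'a \<Rightarrow> bool) \<Rightarrow> 'a set \<Rightarrow> 'a set" where
  "closed_nbhd V E S = S \<union> {v \<in> V. \<exists>s\<in>S. E s v}"

definition nstar :: "'a set \<Rightarrow> ('a \<Rightarrow> 'a \<Rightarrow> bool) \<Rightarrow> 'a set \<Rightarrow> 'a set" where
  "nstar V E A = {x \<in> V. x \<notin> A \<and> (\<exists>a\<in>A. E a x \<and> (\<forall>y\<in>V. E a y \<and> y \<notin> A \<longrightarrow> y = x))}"

fun pd_obs :: "'a set \<Rightarrow> ('a \<Rightarrow> 'a \<Rightarrow> bool) \<Rightarrow> 'a set \<Rightarrow> nat \<Rightarrow> 'a set" where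
  "pd_obs V E S 0 = closed_nbhd V E S"
| "pd_obs V E S (Suc k) = pd_obs V E S k \<union> nstar V E (pd_obs V E S k)"

definition pd_obs_inf :: "'a set \<Rightarrow> ('a \<Rightarrow> 'a \<Rightarrow> bool) \<Rightarrow> 'a set \<Rightarrow> 'a set" where
  "pd_obs_inf V E S = (\<Union>k. pd_obs V E S k)"

definition power_dominating :: "'a set \<Rightarrow> ('a \<Rightarrow> 'a \<Rightarrow> bool) \<Rightarrow> 'a set \<Rightarrow> bool" where
  "power_dominating V E S \<longleftrightarrow> S \<subseteq> V \<and> pd_obs_inf V E S = V"

(* Complete m-ary tree T_{m,h}: vertices are words over {0..<m} of length \<le> h,
   the root is [], and the children of xs are i # xs for i < m. *)
definition tree_V :: "nat \<Rightarrow> nat \<Rightarrow> nat list set" where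
  "tree_V m h = {xs. length xs \<le> h \<and> set xs \<subseteq> {..<m}}"

definition tree_E :: "nat list \<Rightarrow> nat list \<Rightarrow> bool" where
  "tree_E xs ys \<longleftrightarrow> (\<exists>i. ys = i # xs) \<or> (\<exists>i. xs = i # ys)"

(* T^+_{m,h}: vertex None is the stem r', Some xs the tree vertex xs;
   the root r is Some []. *)
definition tplus_V :: "nat \<Rightarrow> nat \<Rightarrow> nat list option set" where
  "tplus_V m h = insert None (Some ` tree_V m h)"

fun tplus_E :: "nat list option \<Rightarrow> nat list option \<Rightarrow> bool" where
  "tplus_E (Some xs) (Some ys) = tree_E xs ys"
| "tplus_E None (Some ys) = (ys = [])"
| "tplus_E (Some xs) None = (xs = [])"
| "tplus_E None None = False"

abbreviation stem :: "nat list option" where "stem \<equiv> None"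
abbreviation root :: "nat list option" where "root \<equiv> Some []"

definition typeII :: "nat \<Rightarrow> nat \<Rightarrow> nat list option set \<Rightarrow> bool" where
  "typeII m h S \<longleftrightarrow> S \<subseteq> tplus_V m h - {stem}
     \<and> \<not> power_dominating (tplus_V m h) tplus_E S
     \<and> power_dominating (tplus_V m h) tplus_E (insert stem S)"

end

theory Submission
  imports Defs
begin

lemma nstar_sub_V: "nstar V E A \<subseteq> V" unfolding nstar_def by auto

lemma pd_obs_V: "S \<subseteq> V \<Longrightarrow> pd_obs V E S k \<subseteq> V"
  by (induction k) (auto simp: closed_nbhd_def nstar_def)

lemma pd_obs_Suc_mono: "pd_obs V E S k \<subseteq> pd_obs V E S (Suc k)" by auto

lemma pd_obs_mono: "k \<le> j \<Longrightarrow> pd_obs V E S k \<subseteq> pd_obs V E S j"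
  using lift_Suc_mono_le[of "pd_obs V E S", OF pd_obs_Suc_mono] by blast

lemma nstar_transfer:
  assumes "x \<in> nstar V E B" "B \<subseteq> A" shows "x \<in> A \<union> nstar V E A"
  using assms unfolding nstar_def by blast

lemma pd_obs_le_closed:
  assumes "closed_nbhd V E T \<subseteq> A" "nstar V E A \<subseteq> A"
  shows "pd_obs V E T k \<subseteq> A"
proof (induction k)
  case 0 then show ?case using assms by simp
next
  case (Suc k)
  show ?case
  proof
    fix x assume "x \<in> pd_obs V E T (Suc k)"
    then consider "x \<in> pd_obs V E T k" | "x \<in> nstar V E (pd_obs V E T k)" by auto
    then show "x \<in> A"
    proof cases
      case 1 then show ?thesis using Suc by blast
    next
      case 2 then show ?thesis using nstar_transfer[OF 2 Suc] assms(2) by blast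
    qed
  qed
qed

lemma pd_inf_le_closed:
  assumes "closed_nbhd V E T \<subseteq> A" "nstar V E A \<subseteq> A"
  shows "pd_obs_inf V E T \<subseteq> A"
  using pd_obs_le_closed[OF assms] unfolding pd_obs_inf_def by blast

lemma pd_obs_stab:
  assumes "finite V" "S \<subseteq> V"
  shows "\<exists>k. pd_obs V E S (Suc k) = pd_obs V E S k"
proof (rule ccontr)
  assume "\<not> ?thesis"
  then have ne: "\<And>k. pd_obs V E S (Suc k) \<noteq> pd_obs V E S k" by blast
  have fin: "finite (pd_obs V E S k)" for k
    using pd_obs_V[OF assms(2)] assms(1) by (rule finite_subset)
  have cge: "card (pd_obs V E S k) \<ge> k" for k
  proof (induction k)
    case 0 then show ?case by simp
  next
    case (Suc k)
    have ps: "pd_obs V E S k \<subset> pd_obs V E S (Suc k)"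
      using ne[of k] pd_obs_Suc_mono[of V E S k] by (simp add: psubset_eq)
    have "card (pd_obs V E S k) < card (pd_obs V E S (Suc k))"
      by (rule psubset_card_mono[OF fin ps])
    then show ?case using Suc.IH by simp
  qed
  have "card (pd_obs V E S (Suc (card V))) \<le> card V"
    by (rule card_mono[OF assms(1) pd_obs_V[OF assms(2)]])
  moreover have "Suc (card V) \<le> card (pd_obs V E S (Suc (card V)))" by (rule cge)
  ultimately show False by simp
qed

lemma pd_inf_closed:
  assumes "finite V" "S \<subseteq> V"
  shows "nstar V E (pd_obs_inf V E S) \<subseteq> pd_obs_inf V E S"
proof -
  obtain k where k: "pd_obs V E S (Suc k) = pd_obs V E S k" using pd_obs_stab[OF assms] by blast
  have nk: "nstar V E (pd_obs V E S k) \<subseteq> pd_obs V E S k"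
    using k by (metis Un_upper2 pd_obs.simps(2))
  have st: "pd_obs V E S (k + d) = pd_obs V E S k" for d
  proof (induction d)
    case 0 then show ?case by simp
  next
    case (Suc d)
    have "pd_obs V E S (k + Suc d) = pd_obs V E S (k + d) \<union> nstar V E (pd_obs V E S (k + d))"
      by simp
    then show ?case using Suc.IH nk by auto
  qed
  have "pd_obs_inf V E S = pd_obs V E S k"
    unfolding pd_obs_inf_def
  proof
    show "(\<Union>j. pd_obs V E S j) \<subseteq> pd_obs V E S k"
    proof
      fix x assume "x \<in> (\<Union>j. pd_obs V E S j)"
      then obtain j where j: "x \<in> pd_obs V E S j" by blast
      show "x \<in> pd_obs V E S k"
      proof (cases "j \<le> k")
        case True show ?thesis using pd_obs_mono[OF True, of V E S] j by (rule subsetD)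
      next
        case False then have jj: "k + (j - k) = j" by simp
        show ?thesis using st[of "j - k"] j unfolding jj by simp
      qed
    qed
    show "pd_obs V E S k \<subseteq> (\<Union>j. pd_obs V E S j)" by (rule UN_upper) simp
  qed
  moreover have "nstar V E (pd_obs V E S k) \<subseteq> pd_obs V E S (Suc k)" by auto
  ultimately show ?thesis using nk by simp
qed

lemma pd_obs_src:
  assumes "S \<subseteq> V"
  shows "x \<in> pd_obs V E S k \<Longrightarrow> x \<in> S \<or> (\<exists>a\<in>pd_obs V E S k. E a x)"
proof (induction k)
  case 0 then show ?case unfolding closed_nbhd_def pd_obs.simps by blast
next
  case (Suc k)
  have sub: "pd_obs V E S k \<subseteq> pd_obs V E S (Suc k)" by (rule pd_obs_Suc_mono)
  from Suc.prems consider "x \<in> pd_obs V E S k" | "x \<in> nstar V E (pd_obs V E S k)" by auto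
  then show ?case
  proof cases
    case 1 then show ?thesis using Suc.IH sub by blast
  next
    case 2 then show ?thesis using sub unfolding nstar_def by blast
  qed
qed

lemma pd_inf_src:
  assumes "S \<subseteq> V" "x \<in> pd_obs_inf V E S"
  shows "x \<in> S \<or> (\<exists>a\<in>pd_obs_inf V E S. E a x)"
  using assms pd_obs_src[OF assms(1)] unfolding pd_obs_inf_def by blast

lemma Some_tplus_V[simp]: "Some xs \<in> tplus_V m h \<longleftrightarrow> length xs \<le> h \<and> set xs \<subseteq> {..<m}"
  by (auto simp: tplus_V_def tree_V_def)

lemma None_tplus_V[simp]: "None \<in> tplus_V m h"
  by (auto simp: tplus_V_def)

lemma finite_tplus_V: "finite (tplus_V m h)"
proof -
  have "tree_V m h = {xs. set xs \<subseteq> {..<m} \<and> length xs \<le> h}" by (auto simp: tree_V_def)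
  then have "finite (tree_V m h)" using finite_lists_length_le[of "{..<m}" h] by simp
  then show ?thesis by (simp add: tplus_V_def)
qed

theorem mainTheorem7:
  fixes m :: nat and S :: "nat list option set"
  assumes "m \<ge> 2"
    and "typeII m 2 S"
  shows "closed_nbhd (tplus_V m 2) tplus_E {root} - pd_obs_inf (tplus_V m 2) tplus_E S = {stem, root}"
proof -
  define V where "V = tplus_V m 2"
  define P where "P = pd_obs_inf V tplus_E S"
  have SV: "S \<subseteq> V" and stS: "stem \<notin> S" using assms(2) by (auto simp: typeII_def V_def)
  have notPD: "P \<noteq> V" using assms(2) SV by (auto simp: typeII_def power_dominating_def V_def P_def)
  have PD: "pd_obs_inf V tplus_E (insert stem S) = V"
    using assms(2) by (auto simp: typeII_def power_dominating_def V_def)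
  have finV: "finite V" using finite_tplus_V V_def by simp
  have PV: "P \<subseteq> V" using pd_obs_V[OF SV] unfolding P_def pd_obs_inf_def by blast
  have NSP: "closed_nbhd V tplus_E S \<subseteq> P" unfolding P_def pd_obs_inf_def
    by (metis UN_upper UNIV_I pd_obs.simps(1))
  have clP: "nstar V tplus_E P \<subseteq> P" using pd_inf_closed[OF finV SV] P_def by simp
  have nb_ins: "closed_nbhd V tplus_E (insert stem S) \<subseteq> insert stem (insert root (closed_nbhd V tplus_E S))"
  proof
    fix x assume "x \<in> closed_nbhd V tplus_E (insert stem S)"
    then show "x \<in> insert stem (insert root (closed_nbhd V tplus_E S))"
      unfolding closed_nbhd_def
      by (cases x) auto
  qed
  have a: "stem \<notin> P"
  proof
    assume sP: "stem \<in> P"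
    have rP: "root \<in> P"
    proof (rule ccontr)
      assume "root \<notin> P"
      then have "root \<in> nstar V tplus_E P"
        unfolding nstar_def using sP
        apply (simp add: V_def)
        apply (rule bexI[of _ stem])
         apply (auto elim: tplus_E.elims)
        done
      then show False using clP \<open>root \<notin> P\<close> by blast
    qed
    have "closed_nbhd V tplus_E (insert stem S) \<subseteq> P" using nb_ins NSP sP rP by blast
    then have "V \<subseteq> P" using pd_inf_le_closed[OF _ clP] PD by blast
    then show False using PV notPD by blast
  qed
  have c: "Some [i] \<in> P" if im: "i < m" for i
  proof (rule ccontr)
    assume ciP: "Some [i] \<notin> P"
    have nbr: "a = Some [i]" if "a \<in> V" "tplus_E a (Some [j, i])" for a j
      using that by (cases a) (auto simp: V_def tree_E_def)
    have leaf: "Some [j, i] \<notin> P" for j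
    proof
      assume lP: "Some [j, i] \<in> P"
      then consider "Some [j, i] \<in> S" | "\<exists>a\<in>P. tplus_E a (Some [j, i])"
        using pd_inf_src[OF SV] P_def by blast
      then show False
      proof cases
        case 1
        then have "j < m" using SV by (auto simp: V_def)
        then have "Some [i] \<in> closed_nbhd V tplus_E S"
          unfolding closed_nbhd_def using 1 im by (auto simp: V_def tree_E_def intro!: bexI[of _ "Some [j,i]"])
        then show False using NSP ciP by blast
      next
        case 2 then show False using nbr PV ciP by blast
      qed
    qed
    define A where "A = V - {Some [j, i] | j. j < m}"
    have "closed_nbhd V tplus_E (insert stem S) \<subseteq> A"
    proof -
      have "insert stem (insert root (closed_nbhd V tplus_E S)) \<subseteq> A"
        using NSP PV leaf by (auto simp: A_def V_def)
      then show ?thesis using nb_ins by blast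
    qed
    moreover have "nstar V tplus_E A \<subseteq> A"
    proof
      fix x assume x: "x \<in> nstar V tplus_E A"
      then obtain j where j: "x = Some [j, i]" "j < m" unfolding nstar_def A_def by auto
      from x obtain a where a: "a \<in> A" "tplus_E a x" "\<forall>y\<in>V. tplus_E a y \<and> y \<notin> A \<longrightarrow> y = x"
        unfolding nstar_def by blast
      have "a = Some [i]" using nbr a j A_def by blast
      define j' where "j' = (if j = 0 then 1 else 0::nat)"
      have "j' < m" "j' \<noteq> j" using assms(1) by (auto simp: j'_def)
      then have "Some [j', i] = x" using a(3) \<open>a = Some [i]\<close> im
        by (auto simp: A_def V_def tree_E_def)
      then show "x \<in> A" using \<open>j' \<noteq> j\<close> j by simp
    qed
    ultimately have "V \<subseteq> A" using pd_inf_le_closed PD by blast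
    moreover have "Some [0, i] \<in> V" using im assms(1) by (simp add: V_def)
    ultimately show False using assms(1) by (auto simp: A_def)
  qed
  have b: "root \<notin> P"
  proof
    assume rP: "root \<in> P"
    have "stem \<in> nstar V tplus_E P"
      unfolding nstar_def
    proof (intro CollectI conjI bexI[of _ root] ballI impI)
      fix y assume y: "y \<in> V" "tplus_E root y \<and> y \<notin> P"
      show "y = stem"
      proof (cases y)
        case (Some ys)
        then obtain i where "ys = [i]" using y by (auto simp: tree_E_def)
        then show ?thesis using y Some c by (auto simp: V_def)
      qed simp
    qed (use a rP in \<open>auto simp: V_def\<close>)
    then show False using clP a by blast
  qed
  have "closed_nbhd V tplus_E {root} - P = {stem, root}"
  proof
    show "closed_nbhd V tplus_E {root} - P \<subseteq> {stem, root}"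
    proof
      fix x assume x: "x \<in> closed_nbhd V tplus_E {root} - P"
      show "x \<in> {stem, root}"
      proof (cases x)
        case (Some ys)
        show ?thesis
        proof (cases "ys = []")
          case False
          then obtain i where "ys = [i]" using x Some by (auto simp: closed_nbhd_def tree_E_def)
          then show ?thesis using x Some c by (auto simp: closed_nbhd_def V_def)
        qed (use Some in simp)
      qed simp
    qed
    show "{stem, root} \<subseteq> closed_nbhd V tplus_E {root} - P"
      using a b by (auto simp: closed_nbhd_def V_def)
  qed
  then show ?thesis by (simp add: V_def P_def)
qed

end
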